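(* Let $\lambda>0$, $\gamma>0$, and let $\beta_1=\beta_1(\gamma)$ be the unique positive solution of $\frac{\sqrt\pi}{2}\gamma x(1+x)^{1/2}(3+x)=1$. If $0\le\beta<\beta_1$, then the problem \begin{align*} &[(1+\beta y(\eta))y'(\eta)]'+2\eta y'(\eta)=0, \quad 0<\eta<\lambda,\\ &y'(0)+\beta y(0)y'(0)-\gamma y(0)=0,\\ &y(\lambda)=1, \end{align*} has a unique non-negative analytic solution $y:[0,\lambda]\to\mathbb{R}$.
   Context: The solution is called the generalized modified error (GME) function. *)

theory Defs
  imports "HOL-Analysis.Analysis"
begin

definition real_analytic_on :: "(real \<Rightarrow> real) \<Rightarrow> real set \<Rightarrow> bool" where
  "real_analytic_on y S \<longleftrightarrow>
     (\<forall>x\<in>S. \<exists>r>0. \<exists>a::nat \<Rightarrow> real.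
        \<forall>t\<in>S. \<bar>t - x\<bar> < r \<longrightarrow> (\<lambda>n. a n * (t - x) ^ n) sums y t)"

definition solves_problem :: "real \<Rightarrow> real \<Rightarrow> real \<Rightarrow> (real \<Rightarrow> real) \<Rightarrow> bool" where
  "solves_problem lam \<beta> \<gamma> y \<longleftrightarrow>
     (\<exists>y'. (\<forall>\<eta>\<in>{0..lam}. (y has_real_derivative y' \<eta>) (at \<eta> within {0..lam}))
        \<and> (\<forall>\<eta>\<in>{0<..<lam}.
              ((\<lambda>t. (1 + \<beta> * y t) * y' t) has_real_derivative (- 2 * \<eta> * y' \<eta>)) (at \<eta>))
        \<and> y' 0 + \<beta> * y 0 * y' 0 - \<gamma> * y 0 = 0
        \<and> y lam = 1)"

end

theory Submission
  imports Defs "HOL-Complex_Analysis.Complex_Analysis"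
begin

lemma linepath_primitive:
  fixes f :: "complex \<Rightarrow> complex"
  assumes "convex S" "open S" "0 \<in> S" "f holomorphic_on S" "z \<in> S"
  shows "((\<lambda>z. contour_integral (linepath 0 z) f) has_field_derivative f z) (at z)"
proof -
  obtain g where g: "\<And>x. x \<in> S \<Longrightarrow> (g has_field_derivative f x) (at x within S)"
    using holomorphic_convex_primitive'[OF assms(1,2,4)] by blast
  have eq: "contour_integral (linepath 0 w) f = g w - g 0" if "w \<in> S" for w
  proof -
    have "closed_segment 0 w \<subseteq> S" using assms(1,3) that by (simp add: closed_segment_subset)
    then have "(f has_contour_integral (g w - g 0)) (linepath 0 w)"
      using contour_integral_primitive[of S g f "linepath 0 w", OF g] by auto
    then show ?thesis by (rule contour_integral_unique)
  qed
  have "(g has_field_derivative f z) (at z)"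
    using g[OF assms(5)] at_within_open[OF assms(5,2)] by simp
  then have "((\<lambda>w. g w - g 0) has_field_derivative f z) (at z)"
    using DERIV_diff[OF _ DERIV_const] by fastforce
  then show ?thesis
    by (rule has_field_derivative_transform_within_open[where S=S]) (use assms(2,5) eq in simp_all)
qed

lemma real_segment_integral:
  fixes f :: "complex \<Rightarrow> complex" and x :: real
  assumes "x \<ge> 0" "continuous_on (closed_segment 0 (of_real x)) f"
    and "\<And>t. 0 \<le> t \<Longrightarrow> t \<le> x \<Longrightarrow> Im (f (of_real t)) = 0 \<and> 0 \<le> Re (f (of_real t))"
  shows "Im (contour_integral (linepath 0 (of_real x)) f) = 0 \<and> 0 \<le> Re (contour_integral (linepath 0 (of_real x)) f)"
proof -
  let ?I = "contour_integral (linepath 0 (of_real x)) f"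
  have "f contour_integrable_on linepath 0 (of_real x)"
    by (rule contour_integrable_continuous_linepath[OF assms(2)])
  then have "(f has_contour_integral ?I) (linepath 0 (of_real x))"
    by (rule has_contour_integral_integral)
  then have hi: "((\<lambda>u. f (linepath 0 (of_real x) u) * (of_real x - 0)) has_integral ?I) {0..1}"
    by (simp add: has_contour_integral_linepath)
  have lp: "linepath 0 (of_real x) u = of_real (u * x)" for u
    by (simp add: linepath_def scaleR_conv_of_real)
  have pt: "Im (f (of_real (u*x))) = 0 \<and> 0 \<le> Re (f (of_real (u*x)))" if "u \<in> {0..1}" for u
    using that assms(1) by (intro assms(3)) (auto intro: mult_left_le_one_le)
  have "((\<lambda>u. Im (f (linepath 0 (of_real x) u) * (of_real x - 0))) has_integral Im ?I) {0..1}"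
    using has_integral_linear[OF hi bounded_linear_Im] by (simp add: o_def)
  moreover have "((\<lambda>u. Im (f (linepath 0 (of_real x) u) * (of_real x - 0))) has_integral 0) {0..1}"
  proof -
    have "((\<lambda>u. 0::real) has_integral 0) {0..1}" by simp
    then show ?thesis
      by (rule has_integral_eq[rotated]) (use pt in \<open>auto simp: lp scaleR_conv_of_real\<close>)
  qed
  ultimately have 1: "Im ?I = 0" by (rule has_integral_unique)
  have "((\<lambda>u. Re (f (linepath 0 (of_real x) u) * (of_real x - 0))) has_integral Re ?I) {0..1}"
    using has_integral_linear[OF hi bounded_linear_Re] by (simp add: o_def)
  then have "0 \<le> Re ?I"
    by (rule has_integral_nonneg) (use pt assms(1) in \<open>auto simp: lp scaleR_conv_of_real\<close>)
  with 1 show ?thesis by simp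
qed

lemma exp_lip:
  fixes a b :: complex
  assumes "Re a \<le> M" "Re b \<le> M"
  shows "norm (exp a - exp b) \<le> exp M * norm (a - b)"
proof -
  have "norm (exp a - exp b) \<le> exp M * norm (a - b)"
  proof (rule field_differentiable_bound[of "{z. Re z \<le> M}" exp exp])
    show "convex {z. Re z \<le> M}" by (rule convex_halfspace_Re_le)
    show "(exp has_field_derivative exp z) (at z within {z. Re z \<le> M})" for z
      by (rule DERIV_subset[OF DERIV_exp]) auto
    show "norm (exp z) \<le> exp M" if "z \<in> {z. Re z \<le> M}" for z
      using that by simp
  qed (use assms in auto)
  then show ?thesis .
qed

lemma weighted_integral_bound:
  fixes f :: "complex \<Rightarrow> complex" and z :: complex
  assumes cont: "continuous_on (closed_segment 0 z) f" and c: "c \<ge> 0" and K: "K > 0"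
    and bd: "\<And>t. t \<in> closed_segment 0 z \<Longrightarrow> norm (f t) \<le> c * exp (K * norm t)"
  shows "norm (contour_integral (linepath 0 z) f) \<le> c * exp (K * norm z) / K"
proof -
  let ?I = "contour_integral (linepath 0 z) f"
  have "(f has_contour_integral ?I) (linepath 0 z)"
    by (rule has_contour_integral_integral[OF contour_integrable_continuous_linepath[OF cont]])
  then have hi: "((\<lambda>u. f (linepath 0 z u) * (z - 0)) has_integral ?I) {0..1}"
    by (simp add: has_contour_integral_linepath)
  have lp: "linepath 0 z u = of_real u * z" for u
    by (simp add: linepath_def scaleR_conv_of_real)
  define g where "g u = c * exp (K * u * norm z) * norm z" for u
  define G where "G u = c * exp (K * u * norm z) / K" for u
  have Gd: "(G has_vector_derivative g u) (at u within {0..1})" for u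
    unfolding G_def g_def has_real_derivative_iff_has_vector_derivative[symmetric]
    using K by (auto intro!: derivative_eq_intros simp: field_simps)
  have gi: "(g has_integral G 1 - G 0) {0..1}"
    by (rule fundamental_theorem_of_calculus) (use Gd in auto)
  have pt: "norm (f (linepath 0 z u) * (z - 0)) \<le> g u" if "u \<in> {0..1}" for u
  proof -
    have seg: "linepath 0 z u \<in> closed_segment 0 z"
      using that by (metis linepath_image_01 image_eqI)
    have nu: "norm (linepath 0 z u) = u * norm z"
      using that by (simp add: lp norm_mult)
    have "norm (f (linepath 0 z u) * (z - 0)) = norm (f (linepath 0 z u)) * norm z"
      by (simp add: norm_mult)
    also have "\<dots> \<le> c * exp (K * (u * norm z)) * norm z"
    proof -
      have "norm (f (linepath 0 z u)) \<le> c * exp (K * (u * norm z))"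
        using bd[OF seg] by (simp only: nu)
      then show ?thesis by (rule mult_right_mono) simp
    qed
    finally show ?thesis by (simp add: g_def mult.assoc)
  qed
  have "norm ?I = norm (integral {0..1} (\<lambda>u. f (linepath 0 z u) * (z - 0)))"
    using integral_unique[OF hi] by simp
  also have "\<dots> \<le> integral {0..1} g"
    by (rule integral_norm_bound_integral[OF has_integral_integrable[OF hi] has_integral_integrable[OF gi]])
       (use pt in auto)
  also have "integral {0..1} g = G 1 - G 0" using gi by (rule integral_unique)
  also have "\<dots> \<le> c * exp (K * norm z) / K"
    using c K by (simp add: G_def divide_right_mono)
  finally show ?thesis .
qed


locale gme =
  fixes lam \<beta> \<gamma> :: real
  assumes lam_pos: "lam > 0" and beta_nn: "\<beta> \<ge> 0" and gam_pos: "\<gamma> > 0"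
begin

definition "R = lam + 2"
definition "Eb = exp (4 * R^2)"
definition "dl = 1 / (8 * (\<beta>+1) * (\<gamma>+1) * Eb)"
definition "Bx = box (Complex (-dl) (-dl)) (Complex (lam+dl) dl)"
definition "Kc = 1 + 8 * \<gamma> * Eb * \<beta> * (4*R+1)"
definition "Vb = 1 + 2*\<gamma>*Eb*R"
definition hh :: "complex \<Rightarrow> complex" where "hh w = 1 / (1 + of_real \<beta> * w)"
definition II where "II v s = contour_integral (linepath 0 s) (\<lambda>t. t * hh (v t))"
definition EE where "EE v s = exp (-2 * II v s)"
definition GG where "GG v s = EE v s * hh (v s)"
definition TT where "TT a v z = of_real a + of_real (\<gamma>*a) * contour_integral (linepath 0 z) (GG v)"
definition PP where "PP v \<longleftrightarrow> v holomorphic_on Bx \<and> (\<forall>z\<in>Bx. 1/2 \<le> 1 + \<beta> * Re (v z))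
   \<and> (\<forall>x\<in>{0..lam}. Im (v (of_real x)) = 0 \<and> 0 \<le> Re (v (of_real x))) \<and> (\<forall>z\<in>Bx. norm (v z) \<le> Vb)"

lemma R_pos: "R \<ge> 2" using lam_pos by (simp add: R_def)
lemma Eb_ge1: "Eb \<ge> 1" by (simp add: Eb_def)
lemma dl_pos: "dl > 0" using beta_nn gam_pos Eb_ge1 by (simp add: dl_def)
lemma dl_le1: "dl \<le> 1"
proof -
  have a: "1 \<le> (\<beta>+1) * (\<gamma>+1)"
    using mult_mono[of 1 "\<beta>+1" 1 "\<gamma>+1"] beta_nn gam_pos by simp
  have "1 \<le> (\<beta>+1) * (\<gamma>+1) * Eb"
    using mult_mono[OF a Eb_ge1] a by simp
  then have "1 \<le> 8 * ((\<beta>+1) * (\<gamma>+1) * Eb)" by linarith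
  then have "1 \<le> 8 * (\<beta>+1) * (\<gamma>+1) * Eb" by (simp only: mult.assoc)
  then show ?thesis by (simp add: dl_def)
qed
lemma Kc_ge1: "Kc \<ge> 1" using beta_nn gam_pos Eb_ge1 R_pos by (simp add: Kc_def)
lemma Vb_ge1: "Vb \<ge> 1" using gam_pos Eb_ge1 R_pos by (simp add: Vb_def)

lemma Bx_open: "open Bx" by (simp only: Bx_def open_box)
lemma Bx_convex: "convex Bx" by (simp add: Bx_def convex_box)
lemma in_Bx: "z \<in> Bx \<longleftrightarrow> -dl < Re z \<and> Re z < lam + dl \<and> -dl < Im z \<and> Im z < dl"
  by (simp add: Bx_def in_box_complex_iff)
lemma real_in_Bx: "x \<in> {0..lam} \<Longrightarrow> of_real x \<in> Bx"
  using dl_pos by (auto simp: in_Bx)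
lemma zero_in_Bx: "0 \<in> Bx" using real_in_Bx[of 0] lam_pos by simp
lemma norm_Bx: "z \<in> Bx \<Longrightarrow> norm z \<le> R"
proof -
  assume z: "z \<in> Bx"
  have "norm z \<le> \<bar>Re z\<bar> + \<bar>Im z\<bar>" by (rule cmod_le)
  also have "\<dots> \<le> (lam + dl) + dl" using z dl_pos lam_pos by (auto simp: in_Bx)
  finally show ?thesis using dl_le1 by (simp add: R_def)
qed
lemma seg_Bx: "z \<in> Bx \<Longrightarrow> closed_segment 0 z \<subseteq> Bx"
  using Bx_convex zero_in_Bx by (simp add: closed_segment_subset)

lemma hh_den: "1/2 \<le> 1 + \<beta> * Re w \<Longrightarrow> norm (1 + of_real \<beta> * w) \<ge> 1/2"
proof -
  assume a: "1/2 \<le> 1 + \<beta> * Re w"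
  have "Re (1 + of_real \<beta> * w) = 1 + \<beta> * Re w" by simp
  then show ?thesis using a complex_Re_le_cmod[of "1 + of_real \<beta> * w"] by linarith
qed
lemma hh_nz: "1/2 \<le> 1 + \<beta> * Re w \<Longrightarrow> 1 + of_real \<beta> * w \<noteq> 0"
  using hh_den by force
lemma hh_bound: "1/2 \<le> 1 + \<beta> * Re w \<Longrightarrow> norm (hh w) \<le> 2"
proof -
  assume a: "1/2 \<le> 1 + \<beta> * Re w"
  have "norm (hh w) = 1 / norm (1 + of_real \<beta> * w)" by (simp add: hh_def norm_divide)
  also have "\<dots> \<le> 2" using hh_den[OF a] by (subst divide_le_eq) auto
  finally show ?thesis .
qed
lemma hh_lip: "1/2 \<le> 1 + \<beta> * Re w1 \<Longrightarrow> 1/2 \<le> 1 + \<beta> * Re w2 \<Longrightarrow>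
   norm (hh w1 - hh w2) \<le> 4 * \<beta> * norm (w1 - w2)"
proof -
  assume a1: "1/2 \<le> 1 + \<beta> * Re w1" and a2: "1/2 \<le> 1 + \<beta> * Re w2"
  have n1: "1 + of_real \<beta> * w1 \<noteq> 0" and n2: "1 + of_real \<beta> * w2 \<noteq> 0"
    using hh_nz a1 a2 by auto
  have "hh w1 - hh w2 = of_real \<beta> * (w2 - w1) * (hh w1 * hh w2)"
    using n1 n2 by (simp add: hh_def field_simps)
  then have "norm (hh w1 - hh w2) = \<beta> * norm (w1 - w2) * (norm (hh w1) * norm (hh w2))"
    using beta_nn by (simp add: norm_mult norm_minus_commute)
  also have "\<dots> \<le> \<beta> * norm (w1 - w2) * (2 * 2)"
    using hh_bound[OF a1] hh_bound[OF a2] beta_nn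
    by (intro mult_left_mono mult_mono) auto
  finally show ?thesis by simp
qed


lemma PP_hol: "PP v \<Longrightarrow> v holomorphic_on Bx" by (simp add: PP_def)
lemma PP_reg: "PP v \<Longrightarrow> z \<in> Bx \<Longrightarrow> 1/2 \<le> 1 + \<beta> * Re (v z)" by (simp add: PP_def)
lemma PP_realpt: "PP v \<Longrightarrow> x \<in> {0..lam} \<Longrightarrow> Im (v (of_real x)) = 0 \<and> 0 \<le> Re (v (of_real x))"
  by (simp add: PP_def)
lemma PP_bd: "PP v \<Longrightarrow> z \<in> Bx \<Longrightarrow> norm (v z) \<le> Vb" by (simp add: PP_def)

lemma hhv_hol: "PP v \<Longrightarrow> (\<lambda>t. hh (v t)) holomorphic_on Bx"
  unfolding hh_def
  by (intro holomorphic_intros PP_hol) (auto dest: PP_reg hh_nz)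

lemma cont_seg: "f holomorphic_on Bx \<Longrightarrow> z \<in> Bx \<Longrightarrow> continuous_on (closed_segment 0 z) f"
  using holomorphic_on_imp_continuous_on continuous_on_subset seg_Bx by blast

lemma II_deriv: "PP v \<Longrightarrow> s \<in> Bx \<Longrightarrow> (II v has_field_derivative s * hh (v s)) (at s)"
  unfolding II_def
  by (rule linepath_primitive[OF Bx_convex Bx_open zero_in_Bx _ ], intro holomorphic_intros hhv_hol)

lemma II_hol: "PP v \<Longrightarrow> II v holomorphic_on Bx"
  using II_deriv Bx_open by (auto simp: holomorphic_on_open)

lemma II_bound: assumes "PP v" "s \<in> Bx" shows "norm (II v s) \<le> 2 * R^2"
proof -
  have "norm (II v s) \<le> (R * 2) * norm (s - 0)"
    unfolding II_def
  proof (rule contour_integral_bound_linepath)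
    show "(\<lambda>t. t * hh (v t)) contour_integrable_on linepath 0 s"
      by (rule contour_integrable_continuous_linepath, rule cont_seg[OF _ assms(2)])
         (intro holomorphic_intros hhv_hol assms(1))
    show "0 \<le> R * 2" using R_pos by simp
    show "norm (t * hh (v t)) \<le> R * 2" if "t \<in> closed_segment 0 s" for t
    proof -
      have t: "t \<in> Bx" using that seg_Bx[OF assms(2)] by auto
      show ?thesis unfolding norm_mult
        by (rule mult_mono) (use norm_Bx[OF t] hh_bound[OF PP_reg[OF assms(1) t]] R_pos in auto)
    qed
  qed
  also have "\<dots> \<le> (R * 2) * R" using norm_Bx[OF assms(2)] R_pos by simp
  finally show ?thesis by (simp add: power2_eq_square)
qed

lemma EE_re: "PP v \<Longrightarrow> s \<in> Bx \<Longrightarrow> Re (-2 * II v s) \<le> 4 * R^2"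
proof -
  assume a: "PP v" "s \<in> Bx"
  have "Re (-2 * II v s) \<le> norm (-2 * II v s)" by (rule complex_Re_le_cmod)
  also have "\<dots> = 2 * norm (II v s)" by (simp add: norm_mult)
  also have "\<dots> \<le> 4 * R^2" using II_bound[OF a] by simp
  finally show ?thesis .
qed

lemma EE_bound: "PP v \<Longrightarrow> s \<in> Bx \<Longrightarrow> norm (EE v s) \<le> Eb"
  unfolding EE_def Eb_def norm_exp_eq_Re using EE_re by simp

lemma EE_deriv: "PP v \<Longrightarrow> s \<in> Bx \<Longrightarrow> (EE v has_field_derivative EE v s * (-2 * (s * hh (v s)))) (at s)"
  unfolding EE_def
  by (rule DERIV_chain2[OF DERIV_exp], rule DERIV_cmult, rule II_deriv)

lemma EE_hol: "PP v \<Longrightarrow> EE v holomorphic_on Bx"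
  using EE_deriv Bx_open by (auto simp: holomorphic_on_open)

lemma GG_hol: "PP v \<Longrightarrow> GG v holomorphic_on Bx"
  unfolding GG_def[abs_def] by (intro holomorphic_intros EE_hol hhv_hol)

lemma GG_bound: "PP v \<Longrightarrow> s \<in> Bx \<Longrightarrow> norm (GG v s) \<le> 2 * Eb"
proof -
  assume a: "PP v" "s \<in> Bx"
  have "norm (GG v s) = norm (EE v s) * norm (hh (v s))" by (simp add: GG_def norm_mult)
  also have "\<dots> \<le> Eb * 2"
    by (rule mult_mono) (use EE_bound[OF a] hh_bound[OF PP_reg[OF a]] Eb_ge1 in auto)
  finally show ?thesis by simp
qed

lemma TT_deriv: "PP v \<Longrightarrow> z \<in> Bx \<Longrightarrow> (TT a v has_field_derivative of_real (\<gamma>*a) * GG v z) (at z)"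
proof -
  assume a: "PP v" "z \<in> Bx"
  have "((\<lambda>z. contour_integral (linepath 0 z) (GG v)) has_field_derivative GG v z) (at z)"
    by (rule linepath_primitive[OF Bx_convex Bx_open zero_in_Bx GG_hol[OF a(1)] a(2)])
  then show ?thesis
    unfolding TT_def[abs_def] using DERIV_add[OF DERIV_const DERIV_cmult] by fastforce
qed

lemma TT_hol: "PP v \<Longrightarrow> TT a v holomorphic_on Bx"
  using TT_deriv Bx_open by (auto simp: holomorphic_on_open)

lemma v_real: "PP v \<Longrightarrow> x \<in> {0..lam} \<Longrightarrow> v (of_real x) = of_real (Re (v (of_real x)))"
  using PP_realpt by (simp add: complex_eq_iff)

lemma hh_real: "r \<ge> 0 \<Longrightarrow> hh (of_real r) = of_real (1 / (1 + \<beta> * r))"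
  by (simp add: hh_def)

lemma hhv_real: assumes "PP v" "x \<in> {0..lam}"
  shows "\<exists>r. hh (v (of_real x)) = of_real r \<and> r > 0"
proof -
  let ?r = "Re (v (of_real x))"
  have r: "?r \<ge> 0" using PP_realpt[OF assms] by simp
  have "hh (v (of_real x)) = of_real (1 / (1 + \<beta> * ?r))"
    using v_real[OF assms] hh_real[OF r] by metis
  moreover have "1 / (1 + \<beta> * ?r) > 0" using r beta_nn by (intro divide_pos_pos add_pos_nonneg) auto
  ultimately show ?thesis by blast
qed

lemma II_real: assumes "PP v" "x \<in> {0..lam}" shows "Im (II v (of_real x)) = 0"
proof -
  have "Im (contour_integral (linepath 0 (of_real x)) (\<lambda>t. t * hh (v t))) = 0 \<and>
        0 \<le> Re (contour_integral (linepath 0 (of_real x)) (\<lambda>t. t * hh (v t)))"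
  proof (rule real_segment_integral)
    show "0 \<le> x" using assms by simp
    show "continuous_on (closed_segment 0 (of_real x)) (\<lambda>t. t * hh (v t))"
      by (rule cont_seg[OF _ real_in_Bx[OF assms(2)]]) (intro holomorphic_intros hhv_hol assms(1))
    show "Im (of_real t * hh (v (of_real t))) = 0 \<and> 0 \<le> Re (of_real t * hh (v (of_real t)))"
      if "0 \<le> t" "t \<le> x" for t
    proof -
      have "t \<in> {0..lam}" using that assms by auto
      then obtain r where "hh (v (of_real t)) = of_real r" "r > 0" using hhv_real[OF assms(1)] by blast
      then show ?thesis using that by simp
    qed
  qed
  then show ?thesis by (simp add: II_def)
qed

lemma EE_real: assumes "PP v" "x \<in> {0..lam}" shows "\<exists>e. EE v (of_real x) = of_real e \<and> e > 0"
proof -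
  have "II v (of_real x) = of_real (Re (II v (of_real x)))"
    using II_real[OF assms] by (simp add: complex_eq_iff)
  then have "EE v (of_real x) = of_real (exp (-2 * Re (II v (of_real x))))"
    unfolding EE_def by (metis exp_of_real of_real_minus of_real_mult of_real_numeral mult_minus_left)
  then show ?thesis by auto
qed

lemma GG_real: assumes "PP v" "x \<in> {0..lam}" shows "\<exists>g. GG v (of_real x) = of_real g \<and> g > 0"
proof -
  obtain e where e: "EE v (of_real x) = of_real e" "e > 0" using EE_real[OF assms] by blast
  obtain r where r: "hh (v (of_real x)) = of_real r" "r > 0" using hhv_real[OF assms] by blast
  show ?thesis using e r by (intro exI[of _ "e*r"]) (simp add: GG_def)
qed

lemma TT_real: assumes "PP v" "0 \<le> a" "x \<in> {0..lam}"
  shows "Im (TT a v (of_real x)) = 0 \<and> a \<le> Re (TT a v (of_real x))"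
proof -
  have "Im (contour_integral (linepath 0 (of_real x)) (GG v)) = 0 \<and>
        0 \<le> Re (contour_integral (linepath 0 (of_real x)) (GG v))"
  proof (rule real_segment_integral)
    show "0 \<le> x" using assms by simp
    show "continuous_on (closed_segment 0 (of_real x)) (GG v)"
      by (rule cont_seg[OF GG_hol[OF assms(1)] real_in_Bx[OF assms(3)]])
    show "Im (GG v (of_real t)) = 0 \<and> 0 \<le> Re (GG v (of_real t))" if "0 \<le> t" "t \<le> x" for t
    proof -
      have "t \<in> {0..lam}" using that assms by auto
      then obtain g where "GG v (of_real t) = of_real g" "g > 0" using GG_real[OF assms(1)] by blast
      then show ?thesis by simp
    qed
  qed
  then show ?thesis using assms gam_pos by (simp add: TT_def)
qed

end

context gme begin

lemma PP_const: "0 \<le> a \<Longrightarrow> a \<le> 1 \<Longrightarrow> PP (\<lambda>z. of_real a)"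
  unfolding PP_def using beta_nn Vb_ge1 by auto

lemma int_GG_bound: "PP v \<Longrightarrow> z \<in> Bx \<Longrightarrow> norm (contour_integral (linepath 0 z) (GG v)) \<le> 2 * Eb * norm z"
proof -
  assume a: "PP v" "z \<in> Bx"
  have "norm (contour_integral (linepath 0 z) (GG v)) \<le> (2*Eb) * norm (z - 0)"
  proof (rule contour_integral_bound_linepath)
    show "GG v contour_integrable_on linepath 0 z"
      by (rule contour_integrable_continuous_linepath, rule cont_seg[OF GG_hol[OF a(1)] a(2)])
    show "0 \<le> 2 * Eb" using Eb_ge1 by simp
    show "norm (GG v t) \<le> 2 * Eb" if "t \<in> closed_segment 0 z" for t
      using GG_bound[OF a(1)] that seg_Bx[OF a(2)] by auto
  qed
  then show ?thesis by simp
qed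

lemma PP_TT: assumes "PP v" "0 \<le> a" "a \<le> 1" shows "PP (TT a v)"
proof -
  have hol: "TT a v holomorphic_on Bx" by (rule TT_hol[OF assms(1)])
  have realp: "\<forall>x\<in>{0..lam}. Im (TT a v (of_real x)) = 0 \<and> 0 \<le> Re (TT a v (of_real x))"
    using TT_real[OF assms(1,2)] assms(2) by fastforce
  have bd: "\<forall>z\<in>Bx. norm (TT a v z) \<le> Vb"
  proof
    fix z assume z: "z \<in> Bx"
    have "norm (TT a v z) \<le> norm (of_real a :: complex) + norm (of_real (\<gamma>*a) * contour_integral (linepath 0 z) (GG v))"
      unfolding TT_def by (rule norm_triangle_ineq)
    also have "\<dots> \<le> 1 + \<gamma> * (2 * Eb * R)"
    proof (rule add_mono)
      show "norm (of_real a :: complex) \<le> 1" using assms by simp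
      have "norm (of_real (\<gamma>*a) * contour_integral (linepath 0 z) (GG v)) = (\<gamma>*a) * norm (contour_integral (linepath 0 z) (GG v))"
        using assms gam_pos by (simp add: norm_mult)
      also have "\<dots> \<le> \<gamma> * (2 * Eb * R)"
      proof (rule mult_mono)
        show "\<gamma> * a \<le> \<gamma>" using assms gam_pos by (simp add: mult_left_le)
        show "norm (contour_integral (linepath 0 z) (GG v)) \<le> 2 * Eb * R"
          using int_GG_bound[OF assms(1) z] norm_Bx[OF z] Eb_ge1
          by (meson order_trans mult_left_mono mult_nonneg_nonneg zero_le_numeral order.trans[OF zero_le_one])
      qed (use gam_pos in auto)
      finally show "norm (of_real (\<gamma>*a) * contour_integral (linepath 0 z) (GG v)) \<le> \<gamma> * (2 * Eb * R)" .
    qed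
    also have "\<dots> = Vb" by (simp add: Vb_def)
    finally show "norm (TT a v z) \<le> Vb" .
  qed
  have reg: "\<forall>z\<in>Bx. 1/2 \<le> 1 + \<beta> * Re (TT a v z)"
  proof
    fix z assume z: "z \<in> Bx"
    define xr where "xr = max 0 (min lam (Re z))"
    have xr: "xr \<in> {0..lam}" using lam_pos by (auto simp: xr_def)
    have p: "of_real xr \<in> Bx" by (rule real_in_Bx[OF xr])
    have dz: "norm (z - of_real xr) \<le> 2 * dl"
    proof -
      have "norm (z - of_real xr) \<le> \<bar>Re (z - of_real xr)\<bar> + \<bar>Im (z - of_real xr)\<bar>" by (rule cmod_le)
      also have "\<dots> \<le> dl + dl" using z lam_pos by (auto simp: in_Bx xr_def)
      finally show ?thesis by simp
    qed
    have "norm (TT a v z - TT a v (of_real xr)) \<le> (\<gamma> * (2*Eb)) * norm (z - of_real xr)"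
    proof (rule field_differentiable_bound[OF Bx_convex])
      show "(TT a v has_field_derivative of_real (\<gamma>*a) * GG v w) (at w within Bx)" if "w \<in> Bx" for w
        using TT_deriv[OF assms(1) that] by (rule DERIV_subset) simp
      show "norm (of_real (\<gamma>*a) * GG v w) \<le> \<gamma> * (2*Eb)" if "w \<in> Bx" for w
      proof -
        have "norm (of_real (\<gamma>*a) * GG v w) = (\<gamma>*a) * norm (GG v w)"
          using assms gam_pos by (simp add: norm_mult)
        also have "\<dots> \<le> \<gamma> * (2*Eb)"
          by (rule mult_mono) (use assms gam_pos GG_bound[OF assms(1) that] in \<open>auto simp: mult_left_le\<close>)
        finally show ?thesis .
      qed
    qed (use z p in auto)
    also have "\<dots> \<le> (\<gamma> * (2*Eb)) * (2 * dl)"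
      by (rule mult_left_mono[OF dz]) (use gam_pos Eb_ge1 in auto)
    finally have n: "norm (TT a v z - TT a v (of_real xr)) \<le> 4 * \<gamma> * Eb * dl" by simp
    have "Re (TT a v (of_real xr)) - Re (TT a v z) \<le> norm (TT a v z - TT a v (of_real xr))"
      using complex_Re_le_cmod[of "TT a v (of_real xr) - TT a v z"] by (simp add: norm_minus_commute)
    with n realp xr have re: "- (4 * \<gamma> * Eb * dl) \<le> Re (TT a v z)" by force
    have key: "\<beta> * (4 * \<gamma> * Eb * dl) \<le> 1/2"
    proof -
      have pos: "8*(\<beta>+1)*(\<gamma>+1)*Eb > 0" using Eb_ge1 beta_nn gam_pos by simp
      have d: "dl * (8*(\<beta>+1)*(\<gamma>+1)*Eb) = 1" unfolding dl_def using pos beta_nn gam_pos Eb_ge1 by simp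
      have "\<beta> * (4 * \<gamma> * Eb * dl) = (\<beta>*\<gamma>) * (4*Eb*dl)" by (simp add: algebra_simps)
      also have "\<dots> \<le> ((\<beta>+1)*(\<gamma>+1)) * (4*Eb*dl)"
        by (rule mult_right_mono) (use beta_nn gam_pos Eb_ge1 dl_pos in \<open>auto intro!: mult_mono\<close>)
      also have "\<dots> = (dl * (8*(\<beta>+1)*(\<gamma>+1)*Eb)) / 2" by (simp add: algebra_simps)
      also have "\<dots> = 1/2" using d by simp
      finally show ?thesis .
    qed
    have "\<beta> * (- (4 * \<gamma> * Eb * dl)) \<le> \<beta> * Re (TT a v z)"
      by (rule mult_left_mono[OF re beta_nn])
    then show "1/2 \<le> 1 + \<beta> * Re (TT a v z)" using key by simp
  qed
  show ?thesis unfolding PP_def using hol reg realp bd by blast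
qed


lemma Kc_pos: "Kc > 0" using Kc_ge1 by simp

lemma int_contour_integrable: "f holomorphic_on Bx \<Longrightarrow> z \<in> Bx \<Longrightarrow> f contour_integrable_on linepath 0 z"
  by (rule contour_integrable_continuous_linepath, rule cont_seg)

lemma contract_factor:
  assumes "D \<ge> 0"
  shows "\<gamma> * (Eb * \<beta> * D * (16 * R / Kc + 4)) / Kc \<le> D / 2"
proof -
  define X where "X = \<gamma> * Eb * \<beta>"
  have X: "X \<ge> 0" using gam_pos Eb_ge1 beta_nn by (simp add: X_def)
  have KX: "Kc = 1 + 2 * X * (16*R+4)" by (simp add: Kc_def X_def algebra_simps)
  have "16 * R / Kc \<le> 16 * R" using Kc_ge1 R_pos by (simp add: divide_le_eq mult_le_cancel_left1)
  then have a: "16 * R / Kc + 4 \<le> 16*R+4" by simp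
  have "\<gamma> * (Eb * \<beta> * D * (16 * R / Kc + 4)) / Kc = (X * D) * (16 * R / Kc + 4) / Kc"
    by (simp add: X_def algebra_simps)
  also have "\<dots> \<le> (X * D) * (16*R+4) / Kc"
    by (intro divide_right_mono mult_left_mono a) (use X assms Kc_pos in auto)
  also have "\<dots> = D * (X * (16*R+4) / Kc)" by simp
  also have "\<dots> \<le> D * (1/2)"
  proof (rule mult_left_mono[OF _ assms])
    have "X * (16*R+4) * 2 \<le> Kc" using KX by simp
    then show "X * (16*R+4) / Kc \<le> 1/2" using Kc_pos by (simp add: divide_le_eq)
  qed
  finally show ?thesis by simp
qed

lemma contract:
  assumes v: "PP v" and w: "PP w" and a: "0 \<le> a" "a \<le> 1" and D: "D \<ge> 0"
    and H: "\<And>z. z \<in> Bx \<Longrightarrow> norm (v z - w z) \<le> D * exp (Kc * norm z)" and z: "z \<in> Bx"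
  shows "norm (TT a v z - TT a w z) \<le> D / 2 * exp (Kc * norm z)"
proof -
  have h1: "norm (hh (v t) - hh (w t)) \<le> (4*\<beta>*D) * exp (Kc * norm t)" if t: "t \<in> Bx" for t
  proof -
    have "norm (hh (v t) - hh (w t)) \<le> 4 * \<beta> * norm (v t - w t)"
      by (rule hh_lip[OF PP_reg[OF v t] PP_reg[OF w t]])
    also have "\<dots> \<le> 4 * \<beta> * (D * exp (Kc * norm t))"
      by (rule mult_left_mono[OF H[OF t]]) (use beta_nn in simp)
    finally show ?thesis by simp
  qed
  have h2: "norm (II v s - II w s) \<le> (4*\<beta>*D*R) * exp (Kc * norm s) / Kc" if s: "s \<in> Bx" for s
  proof -
    have iv: "(\<lambda>t. t * hh (v t)) contour_integrable_on linepath 0 s"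
      by (rule int_contour_integrable[OF _ s]) (intro holomorphic_intros hhv_hol v)
    have iw: "(\<lambda>t. t * hh (w t)) contour_integrable_on linepath 0 s"
      by (rule int_contour_integrable[OF _ s]) (intro holomorphic_intros hhv_hol w)
    have "II v s - II w s = contour_integral (linepath 0 s) (\<lambda>t. t * hh (v t) - t * hh (w t))"
      unfolding II_def by (rule contour_integral_diff[OF iv iw, symmetric])
    also have "norm \<dots> \<le> (4*\<beta>*D*R) * exp (Kc * norm s) / Kc"
    proof (rule weighted_integral_bound[OF _ _ Kc_pos])
      show "continuous_on (closed_segment 0 s) (\<lambda>t. t * hh (v t) - t * hh (w t))"
        by (rule cont_seg[OF _ s]) (intro holomorphic_intros hhv_hol v w)
      show "0 \<le> 4*\<beta>*D*R" using beta_nn D R_pos by simp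
      show "norm (t * hh (v t) - t * hh (w t)) \<le> 4*\<beta>*D*R * exp (Kc * norm t)"
        if "t \<in> closed_segment 0 s" for t
      proof -
        have t: "t \<in> Bx" using that seg_Bx[OF s] by auto
        have "norm (t * hh (v t) - t * hh (w t)) = norm t * norm (hh (v t) - hh (w t))"
          by (simp only: right_diff_distrib[symmetric] norm_mult)
        also have "\<dots> \<le> R * ((4*\<beta>*D) * exp (Kc * norm t))"
          by (rule mult_mono[OF norm_Bx[OF t] h1[OF t]]) (use R_pos in auto)
        finally show ?thesis by (simp add: algebra_simps)
      qed
    qed
    finally show ?thesis .
  qed
  have h3: "norm (EE v s - EE w s) \<le> (8*Eb*\<beta>*D*R) * exp (Kc * norm s) / Kc" if s: "s \<in> Bx" for s
  proof -
    have "norm (EE v s - EE w s) \<le> exp (4*R^2) * norm (-2 * II v s - (-2 * II w s))"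
      unfolding EE_def by (rule exp_lip[OF EE_re[OF v s] EE_re[OF w s]])
    also have "\<dots> = Eb * (2 * norm (II v s - II w s))"
    proof -
      have "-2 * II v s - (-2 * II w s) = (-2) * (II v s - II w s)" by (simp add: algebra_simps)
      then show ?thesis unfolding Eb_def by (simp only: norm_mult) simp
    qed
    also have "\<dots> \<le> Eb * (2 * ((4*\<beta>*D*R) * exp (Kc * norm s) / Kc))"
      using h2[OF s] Eb_ge1 by (intro mult_left_mono) auto
    finally show ?thesis by (simp add: algebra_simps)
  qed
  have h4: "norm (GG v s - GG w s) \<le> (Eb * \<beta> * D * (16 * R / Kc + 4)) * exp (Kc * norm s)" if s: "s \<in> Bx" for s
  proof -
    have "GG v s - GG w s = (EE v s - EE w s) * hh (v s) + EE w s * (hh (v s) - hh (w s))"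
      by (simp add: GG_def algebra_simps)
    then have "norm (GG v s - GG w s) \<le> norm (EE v s - EE w s) * norm (hh (v s)) + norm (EE w s) * norm (hh (v s) - hh (w s))"
      by (metis norm_mult norm_triangle_ineq)
    also have "\<dots> \<le> ((8*Eb*\<beta>*D*R) * exp (Kc * norm s) / Kc) * 2 + Eb * ((4*\<beta>*D) * exp (Kc * norm s))"
      by (intro add_mono mult_mono h3[OF s] hh_bound[OF PP_reg[OF v s]] EE_bound[OF w s] h1[OF s])
         (use Eb_ge1 beta_nn D R_pos Kc_pos in auto)
    also have "\<dots> = (Eb * \<beta> * D * (16 * R / Kc + 4)) * exp (Kc * norm s)"
      by (simp add: field_simps)
    finally show ?thesis .
  qed
  have gv: "GG v contour_integrable_on linepath 0 z" by (rule int_contour_integrable[OF GG_hol[OF v] z])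
  have gw: "GG w contour_integrable_on linepath 0 z" by (rule int_contour_integrable[OF GG_hol[OF w] z])
  have "TT a v z - TT a w z = of_real (\<gamma>*a) * contour_integral (linepath 0 z) (\<lambda>s. GG v s - GG w s)"
    unfolding TT_def contour_integral_diff[OF gv gw] by (simp add: algebra_simps)
  then have "norm (TT a v z - TT a w z) = (\<gamma>*a) * norm (contour_integral (linepath 0 z) (\<lambda>s. GG v s - GG w s))"
    using a gam_pos by (simp add: norm_mult)
  also have "\<dots> \<le> \<gamma> * ((Eb * \<beta> * D * (16 * R / Kc + 4)) * exp (Kc * norm z) / Kc)"
  proof (rule mult_mono)
    show "\<gamma> * a \<le> \<gamma>" using a gam_pos by (simp add: mult_left_le)
    show "norm (contour_integral (linepath 0 z) (\<lambda>s. GG v s - GG w s)) \<le> (Eb * \<beta> * D * (16 * R / Kc + 4)) * exp (Kc * norm z) / Kc"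
    proof (rule weighted_integral_bound[OF _ _ Kc_pos])
      show "continuous_on (closed_segment 0 z) (\<lambda>s. GG v s - GG w s)"
        by (rule cont_seg[OF _ z]) (intro holomorphic_intros GG_hol v w)
      show "0 \<le> Eb * \<beta> * D * (16 * R / Kc + 4)"
        using Eb_ge1 beta_nn D R_pos Kc_pos by simp
      show "norm (GG v t - GG w t) \<le> Eb * \<beta> * D * (16 * R / Kc + 4) * exp (Kc * norm t)"
        if "t \<in> closed_segment 0 z" for t
        using h4 that seg_Bx[OF z] by auto
    qed
  qed (use gam_pos in auto)
  also have "\<dots> = (\<gamma> * (Eb * \<beta> * D * (16 * R / Kc + 4)) / Kc) * exp (Kc * norm z)"
    by simp
  also have "\<dots> \<le> D / 2 * exp (Kc * norm z)"
    by (rule mult_right_mono[OF contract_factor[OF D]]) simp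
  finally show ?thesis .
qed

lemma param:
  assumes v: "PP v" and a: "0 \<le> a" "a \<le> 1" and b: "0 \<le> b" "b \<le> 1" and z: "z \<in> Bx"
  shows "norm (TT a v z - TT b v z) \<le> \<bar>a - b\<bar> * Vb"
proof -
  have "TT a v z - TT b v z = of_real (a - b) * (1 + of_real \<gamma> * contour_integral (linepath 0 z) (GG v))"
    by (simp add: TT_def algebra_simps)
  then have "norm (TT a v z - TT b v z) = norm (of_real (a - b) :: complex) * norm (1 + of_real \<gamma> * contour_integral (linepath 0 z) (GG v))"
    by (simp only: norm_mult)
  also have "\<dots> = \<bar>a - b\<bar> * norm (1 + of_real \<gamma> * contour_integral (linepath 0 z) (GG v))" by (simp only: norm_of_real)
  also have "\<dots> \<le> \<bar>a - b\<bar> * Vb"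
  proof (rule mult_left_mono)
    have "norm (1 + of_real \<gamma> * contour_integral (linepath 0 z) (GG v)) \<le> 1 + \<gamma> * norm (contour_integral (linepath 0 z) (GG v))"
      using norm_triangle_ineq[of 1 "of_real \<gamma> * contour_integral (linepath 0 z) (GG v)"] gam_pos
      by (simp add: norm_mult)
    also have "\<dots> \<le> 1 + \<gamma> * (2 * Eb * R)"
      using int_GG_bound[OF v z] norm_Bx[OF z] Eb_ge1 gam_pos
      by (smt (verit, best) mult_left_mono mult_nonneg_nonneg)
    finally show "norm (1 + of_real \<gamma> * contour_integral (linepath 0 z) (GG v)) \<le> Vb"
      by (simp add: Vb_def algebra_simps)
  qed simp
  finally show ?thesis .
qed

end

context gme begin

definition "FP a v \<longleftrightarrow> PP v \<and> (\<forall>z\<in>Bx. TT a v z = v z)"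

definition it where "it a n = (TT a ^^ n) (\<lambda>z. of_real a)"

lemma it_0: "it a 0 = (\<lambda>z. of_real a)" by (simp add: it_def)
lemma it_Suc: "it a (Suc n) = TT a (it a n)" by (simp add: it_def)

lemma PP_it: "0 \<le> a \<Longrightarrow> a \<le> 1 \<Longrightarrow> PP (it a n)"
  by (induction n) (auto simp: it_0 it_Suc intro: PP_const PP_TT)

lemma exp_ge1: "z \<in> Bx \<Longrightarrow> 1 \<le> exp (Kc * norm z)"
  using Kc_pos by simp

lemma it_diff: assumes "0 \<le> a" "a \<le> 1"
  shows "z \<in> Bx \<Longrightarrow> norm (it a (Suc n) z - it a n z) \<le> (2 * Vb * (1/2)^n) * exp (Kc * norm z)"
proof (induction n arbitrary: z)
  case 0
  have "norm (it a (Suc 0) z - it a 0 z) \<le> norm (it a (Suc 0) z) + norm (it a 0 z)"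
    by (rule norm_triangle_ineq4)
  also have "\<dots> \<le> Vb + Vb"
    using PP_bd[OF PP_it[OF assms] 0] by (intro add_mono) auto
  also have "\<dots> \<le> (2 * Vb * (1/2)^0) * exp (Kc * norm z)"
    using exp_ge1[OF 0] Vb_ge1 by simp
  finally show ?case .
next
  case (Suc n)
  have "norm (it a (Suc (Suc n)) z - it a (Suc n) z) = norm (TT a (it a (Suc n)) z - TT a (it a n) z)"
    by (simp add: it_Suc)
  also have "\<dots> \<le> (2 * Vb * (1/2)^n) / 2 * exp (Kc * norm z)"
    by (rule contract[OF PP_it[OF assms] PP_it[OF assms] assms _ Suc.IH Suc.prems]) (use Vb_ge1 in simp)
  also have "\<dots> = (2 * Vb * (1/2)^Suc n) * exp (Kc * norm z)" by simp
  finally show ?case .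
qed

lemma small_zero: assumes "C > 0" "\<And>e. e > 0 \<Longrightarrow> (x::real) \<le> e * C" shows "x \<le> 0"
proof (rule ccontr)
  assume "\<not> x \<le> 0"
  then have "x > 0" by simp
  have "x \<le> (x / (2*C)) * C" by (rule assms(2)) (use \<open>x > 0\<close> assms(1) in simp)
  also have "\<dots> = x / 2" using assms(1) by simp
  finally show False using \<open>x > 0\<close> by simp
qed

lemma fp_exists: assumes a: "0 \<le> a" "a \<le> 1" shows "\<exists>v. FP a v"
proof -
  define f where "f n z = it a (Suc n) z - it a n z" for n z
  define M where "M n = 2 * Vb * exp (Kc * R) * (1/2)^n" for n
  have fM: "norm (f n z) \<le> M n" if "z \<in> Bx" for n z
  proof -
    have "norm (f n z) \<le> (2 * Vb * (1/2)^n) * exp (Kc * norm z)"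
      unfolding f_def by (rule it_diff[OF a that])
    also have "\<dots> \<le> (2 * Vb * (1/2)^n) * exp (Kc * R)"
      by (rule mult_left_mono) (use norm_Bx[OF that] Kc_pos Vb_ge1 in auto)
    finally show ?thesis by (simp add: M_def algebra_simps)
  qed
  have sM: "summable M" unfolding M_def by (intro summable_mult summable_geometric) simp
  have ul: "uniform_limit Bx (\<lambda>n z. \<Sum>i<n. f i z) (\<lambda>z. suminf (\<lambda>i. f i z)) sequentially"
    by (rule Weierstrass_m_test[OF fM sM])
  have ps: "(\<Sum>i<n. f i z) = it a n z - of_real a" for n z
    unfolding f_def using sum_lessThan_telescope[of "\<lambda>n. it a n z" n] by (simp add: it_0)
  define v where "v z = of_real a + suminf (\<lambda>i. f i z)" for z
  have ul2: "uniform_limit Bx (it a) v sequentially"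
  proof (rule uniform_limitI)
    fix e :: real assume "e > 0"
    then have "\<forall>\<^sub>F n in sequentially. \<forall>x\<in>Bx. dist (\<Sum>i<n. f i x) (suminf (\<lambda>i. f i x)) < e"
      using ul by (simp add: uniform_limit_iff)
    then show "\<forall>\<^sub>F n in sequentially. \<forall>x\<in>Bx. dist (it a n x) (v x) < e"
      by (rule eventually_mono) (simp add: ps v_def dist_norm algebra_simps)
  qed
  have lim: "(\<lambda>n. it a n z) \<longlonglongrightarrow> v z" if "z \<in> Bx" for z
    by (rule tendsto_uniform_limitI[OF ul2 that])
  have hol: "v holomorphic_on Bx"
  proof -
    have "v field_differentiable at z" if z: "z \<in> Bx" for z
    proof -
      obtain e where e: "e > 0" "cball z e \<subseteq> Bx" using Bx_open z open_contains_cball by blast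
      have ev: "\<forall>\<^sub>F n in sequentially. continuous_on (cball z e) (it a n) \<and> it a n holomorphic_on ball z e"
      proof (rule always_eventually, rule allI, rule conjI)
        fix n
        show "continuous_on (cball z e) (it a n)"
          using holomorphic_on_imp_continuous_on[OF PP_hol[OF PP_it[OF a]]] e continuous_on_subset by blast
        show "it a n holomorphic_on ball z e"
          using PP_hol[OF PP_it[OF a]] e ball_subset_cball holomorphic_on_subset by blast
      qed
      obtain "v holomorphic_on ball z e"
        using holomorphic_uniform_limit[OF ev uniform_limit_on_subset[OF ul2 e(2)]] by auto
      then show ?thesis using e(1) by (intro holomorphic_on_imp_differentiable_at) auto
    qed
    then show ?thesis unfolding holomorphic_on_def by (auto intro: field_differentiable_at_within)
  qed
  have reg: "\<forall>z\<in>Bx. 1/2 \<le> 1 + \<beta> * Re (v z)"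
  proof
    fix z assume z: "z \<in> Bx"
    have "(\<lambda>n. 1 + \<beta> * Re (it a n z)) \<longlonglongrightarrow> 1 + \<beta> * Re (v z)"
      by (intro tendsto_intros lim z)
    then show "1/2 \<le> 1 + \<beta> * Re (v z)"
      by (rule LIMSEQ_le_const) (use PP_reg[OF PP_it[OF a] z] in auto)
  qed
  have realp: "\<forall>x\<in>{0..lam}. Im (v (of_real x)) = 0 \<and> 0 \<le> Re (v (of_real x))"
  proof
    fix x assume x: "x \<in> {0..lam}"
    have l: "(\<lambda>n. it a n (of_real x)) \<longlonglongrightarrow> v (of_real x)" by (rule lim[OF real_in_Bx[OF x]])
    have "(\<lambda>n. Im (it a n (of_real x))) \<longlonglongrightarrow> Im (v (of_real x))" by (intro tendsto_intros l)
    moreover have "(\<lambda>n. Im (it a n (of_real x))) = (\<lambda>n. 0)"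
      using PP_realpt[OF PP_it[OF a] x] by auto
    ultimately have 1: "Im (v (of_real x)) = 0" by (simp add: LIMSEQ_const_iff)
    have "(\<lambda>n. Re (it a n (of_real x))) \<longlonglongrightarrow> Re (v (of_real x))" by (intro tendsto_intros l)
    then have 2: "0 \<le> Re (v (of_real x))"
      by (rule LIMSEQ_le_const) (use PP_realpt[OF PP_it[OF a] x] in auto)
    show "Im (v (of_real x)) = 0 \<and> 0 \<le> Re (v (of_real x))" using 1 2 by simp
  qed
  have bd: "\<forall>z\<in>Bx. norm (v z) \<le> Vb"
  proof
    fix z assume z: "z \<in> Bx"
    have "(\<lambda>n. norm (it a n z)) \<longlonglongrightarrow> norm (v z)" by (intro tendsto_intros lim z)
    then show "norm (v z) \<le> Vb"
      by (rule LIMSEQ_le_const2) (use PP_bd[OF PP_it[OF a] z] in auto)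
  qed
  have PPv: "PP v" unfolding PP_def using hol reg realp bd by blast
  have fixv: "TT a v z = v z" if z: "z \<in> Bx" for z
  proof -
    have "norm (TT a v z - v z) \<le> 0"
    proof (rule small_zero[of "exp (Kc * R) / 2 + 1"])
      show "exp (Kc * R) / 2 + 1 > 0" by (simp add: add_pos_pos)
      fix e :: real assume e: "e > 0"
      have "\<forall>\<^sub>F n in sequentially. \<forall>x\<in>Bx. dist (it a n x) (v x) < e"
        using ul2 e by (simp add: uniform_limit_iff)
      then obtain N where N: "\<And>n x. n \<ge> N \<Longrightarrow> x \<in> Bx \<Longrightarrow> dist (it a n x) (v x) < e"
        unfolding eventually_sequentially by blast
      have H: "norm (v x - it a N x) \<le> e * exp (Kc * norm x)" if "x \<in> Bx" for x
      proof -
        have "norm (v x - it a N x) \<le> e" using N[OF _ that, of N] by (simp add: dist_norm norm_minus_commute)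
        also have "\<dots> \<le> e * exp (Kc * norm x)" using exp_ge1[OF that] e by simp
        finally show ?thesis .
      qed
      have c: "norm (TT a v z - TT a (it a N) z) \<le> e / 2 * exp (Kc * norm z)"
        by (rule contract[OF PPv PP_it[OF a] a _ H z]) (use e in simp)
      have d: "norm (it a (Suc N) z - v z) \<le> e"
        using N[of "Suc N" z] z by (simp add: dist_norm)
      have "norm (TT a v z - v z) \<le> norm (TT a v z - TT a (it a N) z) + norm (it a (Suc N) z - v z)"
        using norm_triangle_ineq[of "TT a v z - TT a (it a N) z" "it a (Suc N) z - v z"]
        by (simp add: it_Suc)
      also have "\<dots> \<le> e / 2 * exp (Kc * norm z) + e" using c d by simp
      also have "\<dots> \<le> e / 2 * exp (Kc * R) + e"
        using norm_Bx[OF z] e Kc_pos by (simp add: mult_left_mono)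
      also have "\<dots> = e * (exp (Kc * R) / 2 + 1)" by (simp add: algebra_simps)
      finally show "norm (TT a v z - v z) \<le> e * (exp (Kc * R) / 2 + 1)" .
    qed
    then show ?thesis by simp
  qed
  show ?thesis unfolding FP_def using PPv fixv by blast
qed

lemma fp_dep:
  assumes v: "FP a v" and w: "FP b w" and a: "0 \<le> a" "a \<le> 1" and b: "0 \<le> b" "b \<le> 1" and z: "z \<in> Bx"
  shows "norm (v z - w z) \<le> 2 * Vb * \<bar>a - b\<bar> * exp (Kc * norm z)"
proof -
  have PPv: "PP v" and PPw: "PP w" using v w by (auto simp: FP_def)
  have ind: "\<forall>z\<in>Bx. norm (v z - w z) \<le> (2 * Vb * (1/2)^n + 2 * Vb * \<bar>a - b\<bar>) * exp (Kc * norm z)" for n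
  proof (induction n)
    case 0
    show ?case
    proof
      fix z assume z: "z \<in> Bx"
      have "norm (v z - w z) \<le> norm (v z) + norm (w z)" by (rule norm_triangle_ineq4)
      also have "\<dots> \<le> Vb + Vb" using PP_bd[OF PPv z] PP_bd[OF PPw z] by simp
      also have "\<dots> \<le> (2 * Vb * (1/2)^0 + 2 * Vb * \<bar>a - b\<bar>) * 1" using Vb_ge1 by simp
      also have "\<dots> \<le> (2 * Vb * (1/2)^0 + 2 * Vb * \<bar>a - b\<bar>) * exp (Kc * norm z)"
        by (rule mult_left_mono[OF exp_ge1[OF z]]) (use Vb_ge1 in simp)
      finally show "norm (v z - w z) \<le> (2 * Vb * (1/2)^0 + 2 * Vb * \<bar>a - b\<bar>) * exp (Kc * norm z)" .
    qed
  next
    case (Suc n)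
    show ?case
    proof
      fix z assume z: "z \<in> Bx"
      define D where "D = 2 * Vb * (1/2)^n + 2 * Vb * \<bar>a - b\<bar>"
      have D: "D \<ge> 0" using Vb_ge1 by (simp add: D_def)
      have "v z - w z = (TT a v z - TT a w z) + (TT a w z - TT b w z)"
        using v w z by (simp add: FP_def)
      then have "norm (v z - w z) \<le> norm (TT a v z - TT a w z) + norm (TT a w z - TT b w z)"
        by (metis norm_triangle_ineq)
      also have "\<dots> \<le> D / 2 * exp (Kc * norm z) + \<bar>a - b\<bar> * Vb"
        by (intro add_mono contract[OF PPv PPw a D _ z] param[OF PPw a b z])
           (use Suc.IH in \<open>auto simp: D_def\<close>)
      also have "\<dots> \<le> D / 2 * exp (Kc * norm z) + (\<bar>a - b\<bar> * Vb) * exp (Kc * norm z)"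
        using mult_left_mono[OF exp_ge1[OF z], of "\<bar>a - b\<bar> * Vb"] Vb_ge1 by simp
      also have "\<dots> = (2 * Vb * (1/2)^Suc n + 2 * Vb * \<bar>a - b\<bar>) * exp (Kc * norm z)"
        by (simp add: D_def algebra_simps)
      finally show "norm (v z - w z) \<le> (2 * Vb * (1/2)^Suc n + 2 * Vb * \<bar>a - b\<bar>) * exp (Kc * norm z)" .
    qed
  qed
  have "(\<lambda>n. (2 * Vb * (1/2)^n + 2 * Vb * \<bar>a - b\<bar>) * exp (Kc * norm z)) \<longlonglongrightarrow>
        (2 * Vb * 0 + 2 * Vb * \<bar>a - b\<bar>) * exp (Kc * norm z)"
    by (intro tendsto_intros LIMSEQ_power_zero) simp
  then have "norm (v z - w z) \<le> (2 * Vb * 0 + 2 * Vb * \<bar>a - b\<bar>) * exp (Kc * norm z)"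
    by (rule LIMSEQ_le_const) (use ind z in auto)
  then show ?thesis by simp
qed

end

context gme begin

definition "fp a = (SOME v. FP a v)"
definition "Phi a = Re (fp a (of_real lam))"

lemma FP_fp: "0 \<le> a \<Longrightarrow> a \<le> 1 \<Longrightarrow> FP a (fp a)"
  unfolding fp_def using fp_exists by (metis someI_ex)

lemma lam_in: "of_real lam \<in> Bx" using real_in_Bx[of lam] lam_pos by simp

lemma Phi_lip: assumes "0 \<le> a" "a \<le> 1" "0 \<le> b" "b \<le> 1"
  shows "dist (Phi a) (Phi b) \<le> (2 * Vb * exp (Kc * lam)) * dist a b"
proof -
  have "dist (Phi a) (Phi b) = \<bar>Re (fp a (of_real lam) - fp b (of_real lam))\<bar>"
    by (simp add: Phi_def dist_real_def)
  also have "\<dots> \<le> norm (fp a (of_real lam) - fp b (of_real lam))" by (rule abs_Re_le_cmod)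
  also have "\<dots> \<le> 2 * Vb * \<bar>a - b\<bar> * exp (Kc * norm (of_real lam :: complex))"
    by (rule fp_dep[OF FP_fp FP_fp assms(1-4) lam_in]) (use assms in auto)
  also have "\<dots> = (2 * Vb * exp (Kc * lam)) * dist a b"
    using lam_pos by (simp add: dist_real_def)
  finally show ?thesis .
qed

lemma Phi_cont: "continuous_on {0..1} Phi"
proof (rule lipschitz_on_continuous_on)
  show "(2 * Vb * exp (Kc * lam))-lipschitz_on {0..1} Phi"
    by (rule lipschitz_onI) (use Phi_lip Vb_ge1 in auto)
qed

lemma TT_zero: "TT a v 0 = of_real a" by (simp add: TT_def)

lemma Phi0: "Phi 0 = 0"
proof -
  have "FP 0 (fp 0)" by (rule FP_fp) auto
  then have "fp 0 (of_real lam) = TT 0 (fp 0) (of_real lam)" using lam_in by (simp add: FP_def)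
  then show ?thesis by (simp add: Phi_def TT_def)
qed

lemma Phi1: "Phi 1 \<ge> 1"
proof -
  have F: "FP 1 (fp 1)" by (rule FP_fp) auto
  then have "fp 1 (of_real lam) = TT 1 (fp 1) (of_real lam)" using lam_in by (simp add: FP_def)
  moreover have "1 \<le> Re (TT 1 (fp 1) (of_real lam))"
    using TT_real[of "fp 1" 1 lam] F lam_pos by (simp add: FP_def)
  ultimately show ?thesis by (simp add: Phi_def)
qed

lemma shoot: "\<exists>a. 0 \<le> a \<and> a \<le> 1 \<and> Phi a = 1"
  using IVT'[of Phi 0 1 1] Phi0 Phi1 Phi_cont by auto

theorem exists_solution:
  "\<exists>y. solves_problem lam \<beta> \<gamma> y \<and> (\<forall>\<eta>\<in>{0..lam}. y \<eta> \<ge> 0) \<and> real_analytic_on y {0..lam}"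
proof -
  obtain a where a: "0 \<le> a" "a \<le> 1" "Phi a = 1" using shoot by blast
  define v where "v = fp a"
  have F: "FP a v" unfolding v_def by (rule FP_fp[OF a(1,2)])
  have PPv: "PP v" using F by (simp add: FP_def)
  have fx: "\<And>z. z \<in> Bx \<Longrightarrow> TT a v z = v z" using F by (simp add: FP_def)
  define Y where "Y t = Re (v (of_real t))" for t
  define Y' where "Y' t = Re (of_real (\<gamma>*a) * GG v (of_real t))" for t
  have vd: "(v has_field_derivative of_real (\<gamma>*a) * GG v z) (at z)" if z: "z \<in> Bx" for z
    by (rule has_field_derivative_transform_within_open[OF TT_deriv[OF PPv z] Bx_open z fx])
  have Yd: "(Y has_real_derivative Y' t) (at t within S)" if t: "t \<in> {0..lam}" for t S
  proof -
    have "((\<lambda>x. v (of_real x)) has_vector_derivative of_real (\<gamma>*a) * GG v (of_real t)) (at t within S)"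
      by (rule has_vector_derivative_real_field[OF vd[OF real_in_Bx[OF t]]])
    then show ?thesis unfolding Y_def Y'_def by (rule has_field_derivative_Re)
  qed
  have flux: "(1 + \<beta> * Y t) * Y' t = \<gamma> * a * Re (EE v (of_real t))" if t: "t \<in> {0..lam}" for t
  proof -
    obtain e where e: "EE v (of_real t) = of_real e" "e > 0" using EE_real[OF PPv t] by blast
    have r: "Y t \<ge> 0" using PP_realpt[OF PPv t] by (simp add: Y_def)
    have vr: "v (of_real t) = of_real (Y t)" using v_real[OF PPv t] by (simp add: Y_def)
    have hr: "hh (v (of_real t)) = of_real (1 / (1 + \<beta> * Y t))" using hh_real[OF r] vr by simp
    have pos: "1 + \<beta> * Y t > 0" using r beta_nn by (simp add: add_pos_nonneg)
    have "Y' t = \<gamma> * a * e / (1 + \<beta> * Y t)"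
      unfolding Y'_def GG_def e hr by simp
    then show ?thesis using pos e by simp
  qed
  have fluxd: "((\<lambda>t. (1 + \<beta> * Y t) * Y' t) has_real_derivative (- 2 * \<eta> * Y' \<eta>)) (at \<eta>)"
    if eta: "\<eta> \<in> {0<..<lam}" for \<eta>
  proof -
    have e1: "t \<in> {0..lam}" if "t \<in> {0<..<lam}" for t using that by auto
    have "((\<lambda>x. EE v (of_real x)) has_vector_derivative
           EE v (of_real \<eta>) * (-2 * (of_real \<eta> * hh (v (of_real \<eta>))))) (at \<eta>)"
      by (rule has_vector_derivative_real_field[OF EE_deriv[OF PPv real_in_Bx[OF e1[OF eta]]]])
    then have "((\<lambda>x. Re (EE v (of_real x))) has_real_derivative
           Re (EE v (of_real \<eta>) * (-2 * (of_real \<eta> * hh (v (of_real \<eta>)))))) (at \<eta>)"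
      by (rule has_field_derivative_Re)
    then have "((\<lambda>x. \<gamma> * a * Re (EE v (of_real x))) has_real_derivative
           \<gamma> * a * Re (EE v (of_real \<eta>) * (-2 * (of_real \<eta> * hh (v (of_real \<eta>)))))) (at \<eta>)"
      by (rule DERIV_cmult)
    moreover have "\<gamma> * a * Re (EE v (of_real \<eta>) * (-2 * (of_real \<eta> * hh (v (of_real \<eta>))))) = - 2 * \<eta> * Y' \<eta>"
    proof -
      have q1: "EE v (of_real \<eta>) * (-2 * (of_real \<eta> * hh (v (of_real \<eta>)))) = of_real (-2 * \<eta>) * GG v (of_real \<eta>)"
        by (simp add: GG_def algebra_simps)
      have q2: "Re (of_real (-2 * \<eta>) * GG v (of_real \<eta>)) = -2 * \<eta> * Re (GG v (of_real \<eta>))"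
        by simp
      have q3: "Y' \<eta> = \<gamma> * a * Re (GG v (of_real \<eta>))" by (simp add: Y'_def)
      show ?thesis unfolding q1 q2 q3 by simp
    qed
    ultimately have "((\<lambda>x. \<gamma> * a * Re (EE v (of_real x))) has_real_derivative - 2 * \<eta> * Y' \<eta>) (at \<eta>)"
      by simp
    then show ?thesis
      by (rule has_field_derivative_transform_within_open[where S="{0<..<lam}"])
         (use eta flux e1 in auto)
  qed
  have Y0: "Y 0 = a"
    using fx[OF zero_in_Bx] by (simp add: Y_def TT_zero) (metis Re_complex_of_real)
  have EE0: "EE v 0 = 1" by (simp add: EE_def II_def)
  have bc: "Y' 0 + \<beta> * Y 0 * Y' 0 - \<gamma> * Y 0 = 0"
    using flux[of 0] lam_pos Y0 EE0 by (simp add: algebra_simps)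
  have Ylam: "Y lam = 1" using a(3) by (simp add: Y_def Phi_def v_def)
  have sol: "solves_problem lam \<beta> \<gamma> Y"
    unfolding solves_problem_def
    by (rule exI[of _ Y']) (use Yd fluxd bc Ylam in auto)
  have nn: "\<forall>\<eta>\<in>{0..lam}. Y \<eta> \<ge> 0" using PP_realpt[OF PPv] by (simp add: Y_def)
  have an: "real_analytic_on Y {0..lam}"
    unfolding real_analytic_on_def
  proof
    fix x assume x: "x \<in> {0..lam}"
    obtain r where r: "r > 0" "ball (of_real x) r \<subseteq> Bx"
      using Bx_open real_in_Bx[OF x] open_contains_ball by blast
    have hb: "v holomorphic_on ball (of_real x) r"
      using PP_hol[OF PPv] r(2) holomorphic_on_subset by blast
    define c where "c n = Re ((deriv ^^ n) v (of_real x) / fact n)" for n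
    have "\<forall>t\<in>{0..lam}. \<bar>t - x\<bar> < r \<longrightarrow> (\<lambda>n. c n * (t - x) ^ n) sums Y t"
    proof (intro ballI impI)
      fix t assume t: "t \<in> {0..lam}" "\<bar>t - x\<bar> < r"
      have d: "dist (of_real x :: complex) (of_real t) < r"
      proof -
        have "dist (of_real x :: complex) (of_real t) = \<bar>x - t\<bar>"
          by (simp add: dist_norm flip: of_real_diff)
        also have "\<dots> < r" using t by (simp add: abs_minus_commute)
        finally show ?thesis .
      qed
      then have tb: "(of_real t :: complex) \<in> ball (of_real x) r" by (simp only: mem_ball)
      have "(\<lambda>n. (deriv ^^ n) v (of_real x) / fact n * (of_real t - of_real x)^n) sums v (of_real t)"
        by (rule holomorphic_power_series[OF hb tb])
      then have "(\<lambda>n. Re ((deriv ^^ n) v (of_real x) / fact n * (of_real t - of_real x)^n)) sums Re (v (of_real t))"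
        by (rule sums_Re)
      moreover have "Re ((deriv ^^ n) v (of_real x) / fact n * (of_real t - of_real x)^n) = c n * (t - x) ^ n" for n
      proof -
        have p: "(of_real t - of_real x :: complex)^n = of_real ((t - x)^n)" by simp
        have q: "Re (w * of_real q) = Re w * q" for w :: complex and q :: real by simp
        show ?thesis unfolding p q c_def ..
      qed
      ultimately show "(\<lambda>n. c n * (t - x) ^ n) sums Y t" by (simp add: Y_def)
    qed
    then show "\<exists>r>0. \<exists>c::nat \<Rightarrow> real. \<forall>t\<in>{0..lam}. \<bar>t - x\<bar> < r \<longrightarrow> (\<lambda>n. c n * (t - x) ^ n) sums Y t"
      using r(1) by blast
  qed
  show ?thesis using sol nn an by blast
qed

end

definition NF :: "real \<Rightarrow> real \<Rightarrow> real \<Rightarrow> (real \<Rightarrow> real) \<Rightarrow> (real \<Rightarrow> real) \<Rightarrow> bool" where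
  "NF lam \<beta> \<gamma> y y' \<longleftrightarrow> continuous_on {0..lam} y
     \<and> (\<forall>\<eta>\<in>{0..lam}. (y has_real_derivative y' \<eta>) (at \<eta> within {0..lam}))
     \<and> (\<forall>\<eta>\<in>{0..lam}. (1 + \<beta> * y \<eta>) * y' \<eta> = \<gamma> * y 0 - 2 * \<eta> * y \<eta> + 2 * integral {0..\<eta>} y)
     \<and> (\<forall>\<eta>\<in>{0..lam}. y \<eta> \<ge> 0)"

lemma normal_form:
  assumes lam: "lam > 0" and beta: "\<beta> \<ge> 0" and sol: "solves_problem lam \<beta> \<gamma> y"
    and nn: "\<forall>\<eta>\<in>{0..lam}. y \<eta> \<ge> 0"
  shows "\<exists>y'. NF lam \<beta> \<gamma> y y'"
proof -
  obtain y' where yd: "\<And>\<eta>. \<eta> \<in> {0..lam} \<Longrightarrow> (y has_real_derivative y' \<eta>) (at \<eta> within {0..lam})"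
    and fd: "\<And>\<eta>. \<eta> \<in> {0<..<lam} \<Longrightarrow> ((\<lambda>t. (1 + \<beta> * y t) * y' t) has_real_derivative (- 2 * \<eta> * y' \<eta>)) (at \<eta>)"
    and bc: "y' 0 + \<beta> * y 0 * y' 0 - \<gamma> * y 0 = 0"
    using sol unfolding solves_problem_def by blast
  have cont: "continuous_on {0..lam} y"
    by (rule DERIV_continuous_on[OF yd])
  define J where "J \<eta> = integral {0..\<eta>} y" for \<eta>
  have Jd: "(J has_real_derivative y \<eta>) (at \<eta> within {0..lam})" if "\<eta> \<in> {0..lam}" for \<eta>
    unfolding J_def by (rule integral_has_real_derivative[OF cont that])
  have Jc: "continuous_on {0..lam} J"
    by (rule DERIV_continuous_on[OF Jd])
  have den: "1 + \<beta> * y \<eta> \<ge> 1" if "\<eta> \<in> {0..lam}" for \<eta>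
    using nn that beta by simp
  define C where "C \<eta> = (1 + \<beta> * y \<eta>) * y' \<eta> + 2 * \<eta> * y \<eta> - 2 * J \<eta>" for \<eta>
  have Cd: "(C has_real_derivative 0) (at \<eta> within {0<..<lam})" if e: "\<eta> \<in> {0<..<lam}" for \<eta>
  proof -
    have at: "at \<eta> within {0..lam} = at \<eta>" using e by (simp add: at_within_Icc_at)
    have y1: "(y has_real_derivative y' \<eta>) (at \<eta>)" using yd[of \<eta>] e at by auto
    have J1: "(J has_real_derivative y \<eta>) (at \<eta>)" using Jd[of \<eta>] e at by auto
    have m: "((\<lambda>x. 2 * x * y x) has_real_derivative 2 * y \<eta> + 2 * \<eta> * y' \<eta>) (at \<eta>)"
      using DERIV_mult[OF DERIV_cmult[OF DERIV_ident] y1, of 2] by (simp add: mult.commute)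
    have "(C has_real_derivative (- 2 * \<eta> * y' \<eta>) + (2 * y \<eta> + 2 * \<eta> * y' \<eta>) - 2 * y \<eta>) (at \<eta>)"
      unfolding C_def[abs_def]
      by (intro DERIV_diff DERIV_add fd[OF e] DERIV_cmult J1 m)
    then show ?thesis by (simp add: has_field_derivative_at_within)
  qed
  obtain c where c: "\<And>\<eta>. \<eta> \<in> {0<..<lam} \<Longrightarrow> C \<eta> = c"
    using has_field_derivative_zero_constant[OF convex_real_interval(8) Cd] by blast
  define H where "H \<eta> = (c - 2 * \<eta> * y \<eta> + 2 * J \<eta>) / (1 + \<beta> * y \<eta>)" for \<eta>
  have Hc: "continuous_on {0..lam} H"
    unfolding H_def
  proof (intro continuous_intros)
    show "\<forall>\<eta>\<in>{0..lam}. 1 + \<beta> * y \<eta> \<noteq> 0" using den by force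
  qed (use cont Jc in auto)
  have yH: "y' \<eta> = H \<eta>" if e: "\<eta> \<in> {0<..<lam}" for \<eta>
  proof -
    have "1 + \<beta> * y \<eta> \<ge> 1" using den e by auto
    then show ?thesis using c[OF e] unfolding H_def C_def by (simp add: field_simps)
  qed
  define Z where "Z \<eta> = y 0 + integral {0..\<eta>} H" for \<eta>
  have Zd: "(Z has_real_derivative H \<eta>) (at \<eta> within {0..lam})" if "\<eta> \<in> {0..lam}" for \<eta>
    unfolding Z_def using integral_has_real_derivative[OF Hc that]
    by (intro DERIV_add[OF DERIV_const, simplified]) auto
  have Zc: "continuous_on {0..lam} Z"
    by (rule DERIV_continuous_on[OF Zd])
  have yZ: "y \<eta> = Z \<eta>" if e: "\<eta> \<in> {0..lam}" for \<eta>
  proof (cases "\<eta> = 0")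
    case True then show ?thesis by (simp add: Z_def)
  next
    case False
    then have e0: "0 < \<eta>" using e by auto
    have "(\<lambda>t. y t - Z t) \<eta> = (\<lambda>t. y t - Z t) 0"
    proof (rule DERIV_isconst_end[OF e0])
      show "continuous_on {0..\<eta>} (\<lambda>t. y t - Z t)"
        using cont Zc e by (intro continuous_intros) (auto elim: continuous_on_subset)
      fix x assume x: "0 < x" "x < \<eta>"
      then have xi: "x \<in> {0<..<lam}" using e by auto
      have at: "at x within {0..lam} = at x" using xi by (simp add: at_within_Icc_at)
      have "(y has_real_derivative y' x) (at x)" using yd[of x] xi at by auto
      moreover have "(Z has_real_derivative H x) (at x)" using Zd[of x] xi at by auto
      ultimately have "((\<lambda>t. y t - Z t) has_real_derivative y' x - H x) (at x)" by (rule DERIV_diff)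
      then show "((\<lambda>t. y t - Z t) has_real_derivative 0) (at x)" using yH[OF xi] by simp
    qed
    then show ?thesis by (simp add: Z_def)
  qed
  have y'H: "y' \<eta> = H \<eta>" if e: "\<eta> \<in> {0..lam}" for \<eta>
  proof -
    have "(y has_real_derivative H \<eta>) (at \<eta> within {0..lam})"
      by (rule has_field_derivative_transform_within[OF Zd[OF e] zero_less_one e]) (use yZ in auto)
    then show ?thesis
      using yd[OF e] vector_derivative_unique_within_closed_interval[of 0 lam \<eta> y "y' \<eta>" "H \<eta>"] lam e
      by (auto simp: has_real_derivative_iff_has_vector_derivative)
  qed
  have key: "(1 + \<beta> * y \<eta>) * y' \<eta> = c - 2 * \<eta> * y \<eta> + 2 * J \<eta>" if e: "\<eta> \<in> {0..lam}" for \<eta>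
  proof -
    have "1 + \<beta> * y \<eta> \<ge> 1" using den e by auto
    then show ?thesis using y'H[OF e] unfolding H_def by (simp add: field_simps)
  qed
  have "c = \<gamma> * y 0"
    using key[of 0] lam bc by (simp add: J_def algebra_simps)
  then have "\<forall>\<eta>\<in>{0..lam}. (1 + \<beta> * y \<eta>) * y' \<eta> = \<gamma> * y 0 - 2 * \<eta> * y \<eta> + 2 * integral {0..\<eta>} y"
    using key by (simp add: J_def)
  then show ?thesis unfolding NF_def using cont yd nn by blast
qed

lemma NF_cont: "NF lam \<beta> \<gamma> y y' \<Longrightarrow> continuous_on {0..lam} y" by (simp add: NF_def)
lemma NF_der: "NF lam \<beta> \<gamma> y y' \<Longrightarrow> \<eta> \<in> {0..lam} \<Longrightarrow> (y has_real_derivative y' \<eta>) (at \<eta> within {0..lam})"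
  by (simp add: NF_def)
lemma NF_eq: "NF lam \<beta> \<gamma> y y' \<Longrightarrow> \<eta> \<in> {0..lam} \<Longrightarrow>
   (1 + \<beta> * y \<eta>) * y' \<eta> = \<gamma> * y 0 - 2 * \<eta> * y \<eta> + 2 * integral {0..\<eta>} y"
  by (simp add: NF_def)
lemma NF_nn: "NF lam \<beta> \<gamma> y y' \<Longrightarrow> \<eta> \<in> {0..lam} \<Longrightarrow> y \<eta> \<ge> 0" by (simp add: NF_def)

lemma int_sub: "continuous_on {0..lam} f \<Longrightarrow> \<eta> \<in> {0..lam} \<Longrightarrow> (f::real\<Rightarrow>real) integrable_on {0..\<eta>}"
  by (rule integrable_continuous_real) (auto elim: continuous_on_subset)

lemma compare:
  assumes lam: "lam > 0" and beta: "\<beta> \<ge> 0" and gam: "\<gamma> > 0"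
    and Y: "NF lam \<beta> \<gamma> y y'" and Z: "NF lam \<beta> \<gamma> z z'" and lt: "y 0 < z 0" and eq: "y lam = z lam"
  shows False
proof -
  define d where "d t = z t - y t" for t
  have dc: "continuous_on {0..lam} d"
    unfolding d_def using NF_cont[OF Y] NF_cont[OF Z] by (intro continuous_intros)
  define Zs where "Zs = {s \<in> {0..lam}. d s = 0}"
  have cl: "closed Zs" unfolding Zs_def by (rule continuous_closed_preimage_constant[OF dc]) simp
  have ne: "Zs \<noteq> {}" using eq lam unfolding Zs_def d_def by auto
  have bb: "bdd_below Zs" unfolding Zs_def by (rule bdd_belowI[of _ 0]) auto
  define e where "e = Inf Zs"
  have eZ: "e \<in> Zs" unfolding e_def by (rule closed_contains_Inf[OF ne bb cl])
  have e: "e \<in> {0..lam}" "d e = 0" using eZ by (auto simp: Zs_def)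
  have low: "e \<le> s" if "s \<in> Zs" for s unfolding e_def by (rule cInf_lower[OF that bb])
  have d0: "d 0 > 0" using lt by (simp add: d_def)
  have e0: "e > 0" using e d0 by (cases "e = 0") auto
  have pos: "d s > 0" if s: "0 \<le> s" "s < e" for s
  proof (rule ccontr)
    assume "\<not> d s > 0"
    then have "d s \<le> 0" by simp
    moreover have "continuous_on {0..s} d" using dc s e by (auto elim: continuous_on_subset)
    ultimately obtain t where t: "0 \<le> t" "t \<le> s" "d t = 0"
      using IVT2'[of d s 0 0] d0 s by auto
    then have "t \<in> Zs" using s e by (auto simp: Zs_def)
    then have "e \<le> t" by (rule low)
    then show False using t s by simp
  qed
  have ye: "y e = z e" using e by (simp add: d_def)
  have intd: "integral {0..e} z - integral {0..e} y = integral {0..e} d"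
    unfolding d_def by (rule integral_diff[symmetric]) (use int_sub NF_cont[OF Y] NF_cont[OF Z] e in auto)
  have intnn: "integral {0..e} d \<ge> 0"
  proof (rule integral_nonneg)
    show "d integrable_on {0..e}" by (rule int_sub[OF dc e(1)])
    fix s assume "s \<in> {0..e}"
    then show "0 \<le> d s" using pos[of s] e by (cases "s = e") auto
  qed
  have "(1 + \<beta> * y e) * (z' e - y' e) = \<gamma> * (z 0 - y 0) + 2 * (integral {0..e} z - integral {0..e} y)"
    using NF_eq[OF Y e(1)] NF_eq[OF Z e(1)] ye by (simp add: algebra_simps)
  also have "\<dots> > 0"
  proof -
    have "\<gamma> * (z 0 - y 0) > 0" using gam lt by simp
    then show ?thesis using intd intnn by simp
  qed
  finally have prod: "(1 + \<beta> * y e) * (z' e - y' e) > 0" .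
  have "1 + \<beta> * y e > 0" using NF_nn[OF Y e(1)] beta by (simp add: add_pos_nonneg)
  then have dpos: "z' e - y' e > 0" using prod by (simp add: zero_less_mult_iff)
  have dd: "(d has_real_derivative z' e - y' e) (at e within {0..lam})"
    unfolding d_def by (rule DERIV_diff[OF NF_der[OF Z e(1)] NF_der[OF Y e(1)]])
  obtain \<delta> where \<delta>: "\<delta> > 0" "\<And>h. h > 0 \<Longrightarrow> e - h \<in> {0..lam} \<Longrightarrow> h < \<delta> \<Longrightarrow> d (e - h) < d e"
    using has_real_derivative_pos_inc_left[OF dd dpos] by blast
  define h where "h = min (\<delta>/2) e"
  have h: "h > 0" "h < \<delta>" "h \<le> e" using \<delta>(1) e0 by (auto simp: h_def)
  have "d (e - h) < 0" using \<delta>(2)[OF h(1) _ h(2)] h e by auto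
  moreover have "d (e - h) > 0" using pos[of "e - h"] h by simp
  ultimately show False by simp
qed


lemma cont_bound: "continuous_on {0..lam} (f::real\<Rightarrow>real) \<Longrightarrow> \<exists>M\<ge>0. \<forall>x\<in>{0..lam}. \<bar>f x\<bar> \<le> M"
proof -
  assume c: "continuous_on {0..lam} f"
  have "bounded (f ` {0..lam})" by (rule compact_imp_bounded[OF compact_continuous_image[OF c compact_Icc]])
  then obtain M where "\<forall>x\<in>{0..lam}. norm (f x) \<le> M" by (auto simp: bounded_iff)
  then show ?thesis by (intro exI[of _ "max M 0"]) force
qed

lemma same_start:
  assumes lam: "lam > 0" and beta: "\<beta> \<ge> 0"
    and Y: "NF lam \<beta> \<gamma> y y'" and Z: "NF lam \<beta> \<gamma> z z'" and eq0: "y 0 = z 0"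
  shows "\<forall>\<eta>\<in>{0..lam}. y \<eta> = z \<eta>"
proof -
  define d where "d t = z t - y t" for t
  have yc: "continuous_on {0..lam} y" and zc: "continuous_on {0..lam} z"
    using NF_cont[OF Y] NF_cont[OF Z] by auto
  have dc: "continuous_on {0..lam} d" unfolding d_def using yc zc by (intro continuous_intros)
  have adc: "continuous_on {0..lam} (\<lambda>t. \<bar>d t\<bar>)" using dc by (intro continuous_intros)
  define Ny where "Ny s = \<gamma> * y 0 - 2 * s * y s + 2 * integral {0..s} y" for s
  have Nyc: "continuous_on {0..lam} Ny"
  proof -
    have "continuous_on {0..lam} (\<lambda>s. integral {0..s} y)"
      by (rule DERIV_continuous_on[OF integral_has_real_derivative[OF yc]])
    then show ?thesis unfolding Ny_def using yc by (intro continuous_intros)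
  qed
  obtain M where M: "M \<ge> 0" "\<And>x. x \<in> {0..lam} \<Longrightarrow> \<bar>Ny x\<bar> \<le> M" using cont_bound[OF Nyc] by blast
  define W where "W s = integral {0..s} (\<lambda>t. \<bar>d t\<bar>)" for s
  define L where "L = 2 * lam + M * \<beta>"
  have L: "L \<ge> 0" using lam M beta by (simp add: L_def)
  have Wd: "(W has_real_derivative \<bar>d s\<bar>) (at s within {0..lam})" if "s \<in> {0..lam}" for s
    unfolding W_def by (rule integral_has_real_derivative[OF adc that])
  have Wnn: "W s \<ge> 0" if "s \<in> {0..lam}" for s
    unfolding W_def by (rule integral_nonneg[OF int_sub[OF adc that]]) simp
  have Wmono: "W s \<le> W t" if "s \<in> {0..lam}" "t \<in> {0..lam}" "s \<le> t" for s t
    unfolding W_def by (rule integral_subset_le) (use that int_sub[OF adc] in auto)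
  have intd: "\<bar>integral {0..s} d\<bar> \<le> W s" if "s \<in> {0..lam}" for s
    unfolding W_def
    using integral_norm_bound_integral[OF int_sub[OF dc that] int_sub[OF adc that], of] by simp
  have b1: "\<bar>z' s - y' s\<bar> \<le> L * \<bar>d s\<bar> + 2 * W s" if s: "s \<in> {0..lam}" for s
  proof -
    define p where "p = 1 + \<beta> * z s"
    define q where "q = 1 + \<beta> * y s"
    have p: "p \<ge> 1" using NF_nn[OF Z s] beta by (simp add: p_def)
    have q: "q \<ge> 1" using NF_nn[OF Y s] beta by (simp add: q_def)
    have Nz: "p * z' s = Ny s + (- 2 * s * d s + 2 * integral {0..s} d)"
    proof -
      have "integral {0..s} d = integral {0..s} z - integral {0..s} y"
        unfolding d_def by (rule integral_diff) (use int_sub yc zc s in auto)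
      then show ?thesis using NF_eq[OF Z s] eq0 by (simp add: p_def Ny_def d_def algebra_simps)
    qed
    have Nyq: "q * y' s = Ny s" using NF_eq[OF Y s] by (simp add: q_def Ny_def)
    define A where "A = - 2 * s * d s + 2 * integral {0..s} d"
    have A: "\<bar>A\<bar> \<le> 2 * lam * \<bar>d s\<bar> + 2 * W s"
    proof -
      have "\<bar>A\<bar> \<le> \<bar>- 2 * s * d s\<bar> + \<bar>2 * integral {0..s} d\<bar>"
        unfolding A_def by (rule abs_triangle_ineq)
      also have "\<dots> = 2 * s * \<bar>d s\<bar> + 2 * \<bar>integral {0..s} d\<bar>"
        using s by (simp add: abs_mult)
      also have "\<dots> \<le> 2 * lam * \<bar>d s\<bar> + 2 * W s"
        using s intd[OF s] by (intro add_mono) (auto intro: mult_right_mono)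
      finally show ?thesis .
    qed
    have "z' s - y' s = A / p - Ny s * \<beta> * d s / (p * q)"
    proof -
      have "z' s = (Ny s + A) / p" using Nz p by (simp add: A_def field_simps)
      moreover have "y' s = Ny s / q" using Nyq q by (simp add: field_simps)
      moreover have "q - p = - \<beta> * d s" by (simp add: p_def q_def d_def algebra_simps)
      moreover have "(Ny s + A) / p - Ny s / q = A / p + Ny s * (q - p) / (p * q)"
        using p q by (simp add: field_simps)
      ultimately show ?thesis by simp
    qed
    then have "\<bar>z' s - y' s\<bar> \<le> \<bar>A / p\<bar> + \<bar>Ny s * \<beta> * d s / (p * q)\<bar>"
      by (simp only: abs_triangle_ineq4)
    also have "\<dots> \<le> \<bar>A\<bar> + M * \<beta> * \<bar>d s\<bar>"
    proof (rule add_mono)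
      show "\<bar>A / p\<bar> \<le> \<bar>A\<bar>"
      proof -
        have "\<bar>A\<bar> / p \<le> \<bar>A\<bar> / 1" by (rule divide_left_mono) (use p in auto)
        then show ?thesis using p by (simp add: abs_divide)
      qed
      show "\<bar>Ny s * \<beta> * d s / (p * q)\<bar> \<le> M * \<beta> * \<bar>d s\<bar>"
      proof -
        have pq: "p * q \<ge> 1" using p q by (metis mult_mono' mult_1 zero_le_one order_trans)
        have "\<bar>Ny s * \<beta> * d s / (p * q)\<bar> = \<bar>Ny s\<bar> * \<beta> * \<bar>d s\<bar> / (p * q)"
          using pq beta p q by (simp add: abs_mult)
        also have "\<dots> \<le> \<bar>Ny s\<bar> * \<beta> * \<bar>d s\<bar>"
        proof -
          have "\<bar>Ny s\<bar> * \<beta> * \<bar>d s\<bar> / (p * q) \<le> \<bar>Ny s\<bar> * \<beta> * \<bar>d s\<bar> / 1"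
            by (rule divide_left_mono) (use pq beta in auto)
          then show ?thesis by simp
        qed
        also have "\<dots> \<le> M * \<beta> * \<bar>d s\<bar>"
          using M(2)[OF s] beta by (intro mult_right_mono) auto
        finally show ?thesis .
      qed
    qed
    also have "\<dots> \<le> L * \<bar>d s\<bar> + 2 * W s" using A by (simp add: L_def algebra_simps)
    finally show ?thesis .
  qed
  define L' where "L' = L + 2 * lam"
  have L': "L' \<ge> 0" using L lam by (simp add: L'_def)
  have b2: "\<bar>d \<eta>\<bar> \<le> L' * W \<eta>" if e: "\<eta> \<in> {0..lam}" for \<eta>
  proof -
    have sub: "{0..\<eta>} \<subseteq> {0..lam}" using e by auto
    have ftc: "((\<lambda>s. z' s - y' s) has_integral d \<eta> - d 0) {0..\<eta>}"
    proof (rule fundamental_theorem_of_calculus)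
      show "0 \<le> \<eta>" using e by simp
      fix x assume x: "x \<in> {0..\<eta>}"
      have "(d has_real_derivative z' x - y' x) (at x within {0..lam})"
        unfolding d_def using x sub by (intro DERIV_diff NF_der[OF Z] NF_der[OF Y]) auto
      then have "(d has_real_derivative z' x - y' x) (at x within {0..\<eta>})"
        by (rule DERIV_subset[OF _ sub])
      then show "(d has_vector_derivative z' x - y' x) (at x within {0..\<eta>})"
        by (simp add: has_real_derivative_iff_has_vector_derivative)
    qed
    have d0: "d 0 = 0" using eq0 by (simp add: d_def)
    have gint: "(\<lambda>s. L * \<bar>d s\<bar> + 2 * W s) integrable_on {0..\<eta>}"
    proof -
      have "continuous_on {0..lam} W" by (rule DERIV_continuous_on[OF Wd])
      then show ?thesis using adc dc by (intro int_sub[OF _ e] continuous_intros)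
    qed
    have "\<bar>d \<eta>\<bar> = \<bar>integral {0..\<eta>} (\<lambda>s. z' s - y' s)\<bar>" using integral_unique[OF ftc] d0 by simp
    also have "\<dots> \<le> integral {0..\<eta>} (\<lambda>s. L * \<bar>d s\<bar> + 2 * W s)"
      using integral_norm_bound_integral[OF has_integral_integrable[OF ftc] gint, of] b1 sub by auto
    also have "\<dots> \<le> integral {0..\<eta>} (\<lambda>s. L * \<bar>d s\<bar> + 2 * W \<eta>)"
    proof (rule integral_le[OF gint])
      show "(\<lambda>s. L * \<bar>d s\<bar> + 2 * W \<eta>) integrable_on {0..\<eta>}"
        using adc dc by (intro int_sub[OF _ e] continuous_intros)
      show "L * \<bar>d s\<bar> + 2 * W s \<le> L * \<bar>d s\<bar> + 2 * W \<eta>" if "s \<in> {0..\<eta>}" for s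
        using Wmono[of s \<eta>] that e by auto
    qed
    also have "\<dots> = L * W \<eta> + \<eta> * (2 * W \<eta>)"
    proof -
      have i1: "(\<lambda>s. L * \<bar>d s\<bar>) integrable_on {0..\<eta>}" using adc dc by (intro int_sub[OF _ e] continuous_intros)
      have "integral {0..\<eta>} (\<lambda>s. L * \<bar>d s\<bar> + 2 * W \<eta>) = integral {0..\<eta>} (\<lambda>s. L * \<bar>d s\<bar>) + integral {0..\<eta>} (\<lambda>s. 2 * W \<eta>)"
        by (rule integral_add[OF i1]) (simp add: integrable_on_const)
      also have "integral {0..\<eta>} (\<lambda>s. L * \<bar>d s\<bar>) = L * W \<eta>"
        unfolding W_def using integral_cmul[of "{0..\<eta>}" L "\<lambda>s. \<bar>d s\<bar>"] by simp
      also have "integral {0..\<eta>} (\<lambda>s. 2 * W \<eta>) = \<eta> * (2 * W \<eta>)" using e by simp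
      finally show ?thesis .
    qed
    also have "\<dots> \<le> L' * W \<eta>"
      using Wnn[OF e] e by (simp add: L'_def algebra_simps mult_right_mono)
    finally show ?thesis .
  qed
  have W0: "W \<eta> = 0" if e: "\<eta> \<in> {0..lam}" for \<eta>
  proof -
    define G where "G s = W s * exp (- L' * s)" for s
    define G' where "G' s = W s * (exp (- L' * s) * (- L')) + \<bar>d s\<bar> * exp (- L' * s)" for s
    have sub: "{0..\<eta>} \<subseteq> {0..lam}" using e by auto
    have ftc: "(G' has_integral G \<eta> - G 0) {0..\<eta>}"
    proof (rule fundamental_theorem_of_calculus)
      show "0 \<le> \<eta>" using e by simp
      fix x assume x: "x \<in> {0..\<eta>}"
      have ex: "((\<lambda>s. exp (- L' * s)) has_real_derivative exp (- L' * x) * (- L')) (at x within {0..lam})"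
        using DERIV_chain2[OF DERIV_exp DERIV_cmult[OF DERIV_ident, of "- L'"]] by (simp add: DERIV_subset)
      have "(G has_real_derivative G' x) (at x within {0..lam})"
        unfolding G_def[abs_def] G'_def
        by (rule DERIV_mult'[OF Wd ex]) (use x sub in auto)
      then show "(G has_vector_derivative G' x) (at x within {0..\<eta>})"
        using DERIV_subset[OF _ sub] by (simp add: has_real_derivative_iff_has_vector_derivative)
    qed
    have "G \<eta> - G 0 \<le> 0"
    proof (rule has_integral_le[OF ftc has_integral_0])
      fix s assume s: "s \<in> {0..\<eta>}"
      then have s': "s \<in> {0..lam}" using sub by auto
      have "G' s = exp (- L' * s) * (\<bar>d s\<bar> - L' * W s)" by (simp add: G'_def algebra_simps)
      also have "\<dots> \<le> 0" using b2[OF s'] by (simp add: mult_nonneg_nonpos)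
      finally show "G' s \<le> 0" .
    qed
    moreover have "G 0 = 0" by (simp add: G_def W_def)
    ultimately have "W \<eta> * exp (- L' * \<eta>) \<le> 0" by (simp add: G_def)
    then have "W \<eta> \<le> 0" by (simp add: mult_le_0_iff)
    then show ?thesis using Wnn[OF e] by simp
  qed
  show ?thesis
  proof
    fix \<eta> assume e: "\<eta> \<in> {0..lam}"
    have "\<bar>d \<eta>\<bar> \<le> 0" using b2[OF e] W0[OF e] by simp
    then show "y \<eta> = z \<eta>" by (simp add: d_def)
  qed
qed

theorem theorem3p7:
  fixes lam \<gamma> \<beta> \<beta>1 :: real
  assumes "lam > 0" and "\<gamma> > 0"
    and "\<beta>1 > 0"
    and "sqrt pi / 2 * \<gamma> * \<beta>1 * sqrt (1 + \<beta>1) * (3 + \<beta>1) = 1"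
    and "\<forall>x>0. sqrt pi / 2 * \<gamma> * x * sqrt (1 + x) * (3 + x) = 1 \<longrightarrow> x = \<beta>1"
    and "0 \<le> \<beta>" and "\<beta> < \<beta>1"
  shows "\<exists>y. solves_problem lam \<beta> \<gamma> y \<and> (\<forall>\<eta>\<in>{0..lam}. y \<eta> \<ge> 0)
              \<and> real_analytic_on y {0..lam}
              \<and> (\<forall>z. solves_problem lam \<beta> \<gamma> z \<and> (\<forall>\<eta>\<in>{0..lam}. z \<eta> \<ge> 0)
                     \<and> real_analytic_on z {0..lam} \<longrightarrow> (\<forall>\<eta>\<in>{0..lam}. z \<eta> = y \<eta>))"
proof -
  interpret gme lam \<beta> \<gamma> using assms by unfold_locales auto
  obtain y where y: "solves_problem lam \<beta> \<gamma> y" "\<forall>\<eta>\<in>{0..lam}. y \<eta> \<ge> 0" "real_analytic_on y {0..lam}"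
    using exists_solution by blast
  have uniq: "\<forall>\<eta>\<in>{0..lam}. z \<eta> = y \<eta>"
    if z: "solves_problem lam \<beta> \<gamma> z" "\<forall>\<eta>\<in>{0..lam}. z \<eta> \<ge> 0" for z
  proof -
    obtain y' where Y: "NF lam \<beta> \<gamma> y y'" using normal_form[OF assms(1) assms(6) y(1,2)] by blast
    obtain z' where Z: "NF lam \<beta> \<gamma> z z'" using normal_form[OF assms(1) assms(6) z] by blast
    have yl: "y lam = z lam"
    proof -
      have "y lam = 1" using y(1) unfolding solves_problem_def by blast
      moreover have "z lam = 1" using z(1) unfolding solves_problem_def by blast
      ultimately show ?thesis by simp
    qed
    consider "y 0 < z 0" | "z 0 < y 0" | "y 0 = z 0" by linarith
    then show ?thesis
    proof cases
      case 1
      then show ?thesis using compare[OF assms(1) assms(6) assms(2) Y Z 1 yl] by blast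
    next
      case 2
      then show ?thesis using compare[OF assms(1) assms(6) assms(2) Z Y 2 yl[symmetric]] by blast
    next
      case 3
      then show ?thesis using same_start[OF assms(1) assms(6) Z Y 3[symmetric]] by blast
    qed
  qed
  show ?thesis using y uniq by blast
qed

end
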